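(* Let $G$ be a coarsely bottlenecked graph and $H$ a graph such that $H$ is not an asymptotic minor of $G$. For any $M\in\mathbb N$ such that $G$ does not contain an $M$-fat $H$ minor, the skeleton $G_{M,M}$ (for any choice of root $x_0\in V(G)$) contains no $3$-fat $H$ minor.
   Context: All graphs are connected (and unbounded); multi-edges are allowed. $d$ denotes the graph metric on vertices. For $M\ge 0$: sets $X,Y$ of vertices are $M$-disjoint if $d(x,y)>M$ for all $x\in X,y\in Y$; a set $X$ is $M$-connected if any two of its points are joined by a finite sequence of points of $X$ with consecutive points at distance $\le M$; $N_M(S)=\{y: d(s,y)<M\text{ for some } s\in S\}$. An $X,Y$ path is a path from a vertex of $X$ to a vertex of $Y$. $G$ is $M$-fat $n$-bottlenecked if for any two connected $M$-disjoint subgraphs $X,Y\subset G$ there is $S\subset V(G)\setminus(V(X)\cup V(Y))$, $|S|=n$, such that every $X,Y$ path meets $N_M(S)$; $G$ is coarsely bottlenecked if this holds for some $M,n\in\mathbb N$. $H$ is an $M$-fat minor of $G$ if there are connected subgraphs $B_v$ ($v\in V(H)$) and paths $P_e$ ($e\in E(H)$), $P_e$ joining $B_u$ to $B_v$ for $e=uv$, such that any two of these sets are $M$-disjoint unless they correspond to an incident vertex–edge pair of $H$; $H$ is an asymptotic minor of $G$ if $G$ has an $M$-fat $H$ minor for all $M$. Skeleton $G_{\lambda,k}$ (root $x_0$, scale $\lambda\ge1$, connectivity $k\ge1$): layers $A_{N,\lambda}=\{x: N\lambda<d(x,x_0)\le(N+1)\lambda\}$, $N\in\mathbb Z$; blocks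 are the maximal $k$-connected subsets of layers; $G_{\lambda,k}$ has a vertex per block and an edge between two blocks iff an edge of $G$ joins them. *)

theory Defs
  imports Complex_Main "HOL-Library.Extended_Nat"
begin

text \<open>A graph G (for the metric, paths and connected subgraphs only the
vertex set and the adjacency relation matter, so parallel edges of G are
irrelevant) is a pair (V, E) of a vertex set and an adjacency relation.\<close>

type_synonym 'a sgraph = "'a set \<times> ('a \<Rightarrow> 'a \<Rightarrow> bool)"

definition verts :: "'a sgraph \<Rightarrow> 'a set" where "verts G = fst G"
definition adj :: "'a sgraph \<Rightarrow> 'a \<Rightarrow> 'a \<Rightarrow> bool" where "adj G = snd G"

definition wf_graph :: "'a sgraph \<Rightarrow> bool" where
  "wf_graph G \<longleftrightarrow> (\<forall>x y. adj G x y \<longrightarrow> x \<in> verts G \<and> y \<in> verts G \<and> adj G y x)"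

definition walk :: "'a sgraph \<Rightarrow> 'a list \<Rightarrow> bool" where
  "walk G p \<longleftrightarrow> p \<noteq> [] \<and> set p \<subseteq> verts G \<and>
     (\<forall>i. Suc i < length p \<longrightarrow> adj G (p ! i) (p ! Suc i))"

definition gpath :: "'a sgraph \<Rightarrow> 'a list \<Rightarrow> bool" where
  "gpath G p \<longleftrightarrow> walk G p \<and> distinct p"

text \<open>Graph metric (infinite if no walk exists).\<close>
definition dist :: "'a sgraph \<Rightarrow> 'a \<Rightarrow> 'a \<Rightarrow> enat" where
  "dist G x y = Inf {enat (length p - 1) | p. walk G p \<and> hd p = x \<and> last p = y}"

definition connected_graph :: "'a sgraph \<Rightarrow> bool" where
  "connected_graph G \<longleftrightarrow> verts G \<noteq> {} \<and>
     (\<forall>x\<in>verts G. \<forall>y\<in>verts G. \<exists>p. walk G p \<and> hd p = x \<and> last p = y)"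

definition unbounded_graph :: "'a sgraph \<Rightarrow> bool" where
  "unbounded_graph G \<longleftrightarrow> (\<forall>n::nat. \<exists>x\<in>verts G. \<exists>y\<in>verts G. dist G x y > enat n)"

definition conn_sub :: "'a sgraph \<Rightarrow> 'a set \<Rightarrow> bool" where
  "conn_sub G X \<longleftrightarrow> X \<noteq> {} \<and> X \<subseteq> verts G \<and>
     (\<forall>x\<in>X. \<forall>y\<in>X. \<exists>p. walk G p \<and> set p \<subseteq> X \<and> hd p = x \<and> last p = y)"

definition M_disjoint :: "'a sgraph \<Rightarrow> nat \<Rightarrow> 'a set \<Rightarrow> 'a set \<Rightarrow> bool" where
  "M_disjoint G M X Y \<longleftrightarrow> (\<forall>x\<in>X. \<forall>y\<in>Y. dist G x y > enat M)"

definition M_connected :: "'a sgraph \<Rightarrow> nat \<Rightarrow> 'a set \<Rightarrow> bool" where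
  "M_connected G M X \<longleftrightarrow> (\<forall>x\<in>X. \<forall>y\<in>X. \<exists>xs. xs \<noteq> [] \<and> set xs \<subseteq> X \<and>
      hd xs = x \<and> last xs = y \<and>
      (\<forall>i. Suc i < length xs \<longrightarrow> dist G (xs ! i) (xs ! Suc i) \<le> enat M))"

definition nbhd :: "'a sgraph \<Rightarrow> nat \<Rightarrow> 'a set \<Rightarrow> 'a set" where
  "nbhd G M S = {y \<in> verts G. \<exists>s\<in>S. dist G s y < enat M}"

definition fat_bottlenecked :: "'a sgraph \<Rightarrow> nat \<Rightarrow> nat \<Rightarrow> bool" where
  "fat_bottlenecked G M n \<longleftrightarrow>
    (\<forall>X Y. conn_sub G X \<and> conn_sub G Y \<and> M_disjoint G M X Y \<longrightarrow>
      (\<exists>S. S \<subseteq> verts G - (X \<union> Y) \<and> finite S \<and> card S = n \<and>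
         (\<forall>p. gpath G p \<and> hd p \<in> X \<and> last p \<in> Y \<longrightarrow> set p \<inter> nbhd G M S \<noteq> {})))"

definition coarsely_bottlenecked :: "'a sgraph \<Rightarrow> bool" where
  "coarsely_bottlenecked G \<longleftrightarrow> (\<exists>M n. fat_bottlenecked G M n)"

text \<open>A multigraph H (multi-edges and loops allowed): vertex set, edge set,
and an endpoint map.\<close>
type_synonym ('v,'e) mgraph = "'v set \<times> 'e set \<times> ('e \<Rightarrow> 'v \<times> 'v)"

definition wf_mgraph :: "('v,'e) mgraph \<Rightarrow> bool" where
  "wf_mgraph H \<longleftrightarrow> (case H of (VH, EH, ends) \<Rightarrow>
      (\<forall>e\<in>EH. fst (ends e) \<in> VH \<and> snd (ends e) \<in> VH))"

definition fat_minor :: "nat \<Rightarrow> ('v,'e) mgraph \<Rightarrow> 'a sgraph \<Rightarrow> bool" where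
  "fat_minor M H G \<longleftrightarrow> (case H of (VH, EH, ends) \<Rightarrow>
     (\<exists>B :: 'v \<Rightarrow> 'a set. \<exists>P :: 'e \<Rightarrow> 'a list.
        (\<forall>v\<in>VH. conn_sub G (B v)) \<and>
        (\<forall>e\<in>EH. gpath G (P e) \<and> hd (P e) \<in> B (fst (ends e)) \<and> last (P e) \<in> B (snd (ends e))) \<and>
        (\<forall>u\<in>VH. \<forall>v\<in>VH. u \<noteq> v \<longrightarrow> M_disjoint G M (B u) (B v)) \<and>
        (\<forall>e\<in>EH. \<forall>f\<in>EH. e \<noteq> f \<longrightarrow> M_disjoint G M (set (P e)) (set (P f))) \<and>
        (\<forall>v\<in>VH. \<forall>e\<in>EH. v \<noteq> fst (ends e) \<and> v \<noteq> snd (ends e) \<longrightarrow>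
            M_disjoint G M (B v) (set (P e)))))"

definition asymptotic_minor :: "('v,'e) mgraph \<Rightarrow> 'a sgraph \<Rightarrow> bool" where
  "asymptotic_minor H G \<longleftrightarrow> (\<forall>M. fat_minor M H G)"

definition layer :: "'a sgraph \<Rightarrow> 'a \<Rightarrow> real \<Rightarrow> int \<Rightarrow> 'a set" where
  "layer G x0 lam N = {x \<in> verts G. \<exists>n::nat. dist G x0 x = enat n \<and>
       real_of_int N * lam < real n \<and> real n \<le> real_of_int (N + 1) * lam}"

definition is_block :: "'a sgraph \<Rightarrow> 'a \<Rightarrow> real \<Rightarrow> nat \<Rightarrow> 'a set \<Rightarrow> bool" where
  "is_block G x0 lam k B \<longleftrightarrow> B \<noteq> {} \<and> (\<exists>N. B \<subseteq> layer G x0 lam N \<and> M_connected G k B \<and>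
      (\<forall>C. B \<subseteq> C \<and> C \<subseteq> layer G x0 lam N \<and> M_connected G k C \<longrightarrow> C = B))"

definition skeleton :: "'a sgraph \<Rightarrow> 'a \<Rightarrow> real \<Rightarrow> nat \<Rightarrow> 'a set sgraph" where
  "skeleton G x0 lam k = ({B. is_block G x0 lam k B},
     \<lambda>B C. is_block G x0 lam k B \<and> is_block G x0 lam k C \<and> B \<noteq> C \<and>
            (\<exists>x\<in>B. \<exists>y\<in>C. adj G x y))"

end

theory Submission
  imports Defs
begin

definition grel :: "'a sgraph \<Rightarrow> 'a set \<Rightarrow> ('a \<times> 'a) set" where
  "grel G X = {(a,b). a \<in> X \<and> a \<in> verts G \<and> b \<in> X \<and> b \<in> verts G \<and> adj G a b}"

lemma walk_single[simp]: "walk G [x] \<longleftrightarrow> x \<in> verts G"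
  by (simp add: walk_def)

lemma walk_Cons2: "walk G (x # y # p) \<longleftrightarrow> x \<in> verts G \<and> adj G x y \<and> walk G (y # p)"
proof
  assume "walk G (x # y # p)"
  then show "x \<in> verts G \<and> adj G x y \<and> walk G (y # p)"
    unfolding walk_def by (auto dest: spec[where x="Suc _"] spec[where x=0])
next
  assume a: "x \<in> verts G \<and> adj G x y \<and> walk G (y # p)"
  show "walk G (x # y # p)" unfolding walk_def
  proof (intro conjI allI impI)
    fix i assume "Suc i < length (x # y # p)"
    then show "adj G ((x # y # p) ! i) ((x # y # p) ! Suc i)"
      using a unfolding walk_def by (cases i) auto
  qed (use a in \<open>auto simp: walk_def\<close>)
qed

lemma walk_Cons: "walk G (x # p) \<longleftrightarrow> x \<in> verts G \<and> (p = [] \<or> adj G x (hd p) \<and> walk G p)"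
  by (cases p) (auto simp: walk_Cons2)

lemma walk_nonempty: "walk G p \<Longrightarrow> p \<noteq> []" by (simp add: walk_def)
lemma walk_verts: "walk G p \<Longrightarrow> set p \<subseteq> verts G" by (simp add: walk_def)

lemma walk_append:
  "p \<noteq> [] \<Longrightarrow> q \<noteq> [] \<Longrightarrow> walk G (p @ q) \<longleftrightarrow> walk G p \<and> walk G q \<and> adj G (last p) (hd q)"
proof (induction p)
  case Nil then show ?case by simp
next
  case (Cons x p)
  show ?case
  proof (cases "p = []")
    case True
    then show ?thesis using Cons.prems by (cases q) (auto simp: walk_Cons2)
  next
    case False
    then show ?thesis using Cons by (auto simp: walk_Cons hd_append)
  qed
qed

lemma walk_rtrancl: "walk G p \<Longrightarrow> set p \<subseteq> X \<Longrightarrow> (hd p, last p) \<in> (grel G X)\<^sup>*"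
proof (induction p)
  case Nil then show ?case by (simp add: walk_def)
next
  case (Cons x p)
  show ?case
  proof (cases "p = []")
    case True then show ?thesis by simp
  next
    case False
    then have "(x, hd p) \<in> grel G X" using Cons.prems walk_verts[OF Cons.prems(1)]
      by (auto simp: walk_Cons grel_def)
    moreover have "(hd p, last p) \<in> (grel G X)\<^sup>*" using Cons False by (auto simp: walk_Cons)
    ultimately show ?thesis using False by (simp add: converse_rtrancl_into_rtrancl)
  qed
qed

lemma rtrancl_walk:
  assumes "(u, w) \<in> (grel G X)\<^sup>*" "u \<in> verts G"
  shows "\<exists>p. walk G p \<and> hd p = u \<and> last p = w \<and> set p \<subseteq> {y. (u, y) \<in> (grel G X)\<^sup>*}"
  using assms
proof (induction rule: converse_rtrancl_induct)
  case base then show ?case by (intro exI[of _ "[w]"]) auto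
next
  case (step u y)
  then have "y \<in> verts G" by (auto simp: grel_def)
  with step obtain p where p: "walk G p" "hd p = y" "last p = w" "set p \<subseteq> {z. (y, z) \<in> (grel G X)\<^sup>*}"
    by blast
  have "walk G (u # p)" using p step.prems step.hyps(1) walk_nonempty[OF p(1)]
    by (auto simp: walk_Cons grel_def)
  moreover have "set (u # p) \<subseteq> {z. (u, z) \<in> (grel G X)\<^sup>*}"
    using p(4) step.hyps(1) by (auto intro: converse_rtrancl_into_rtrancl)
  ultimately show ?case using p walk_nonempty[OF p(1)] by (intro exI[of _ "u # p"]) auto
qed

lemma walk_suffix: "walk G (q1 @ x # q2) \<Longrightarrow> walk G (x # q2)"
  by (cases "q1 = []") (auto simp: walk_append)

lemma walk_gpath: "walk G p \<Longrightarrow> \<exists>q. gpath G q \<and> hd q = hd p \<and> last q = last p \<and> set q \<subseteq> set p"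
proof (induction p)
  case Nil then show ?case by (simp add: walk_def)
next
  case (Cons x p)
  show ?case
  proof (cases "p = []")
    case True then show ?thesis using Cons.prems by (intro exI[of _ "[x]"]) (auto simp: gpath_def)
  next
    case False
    with Cons obtain q where q: "gpath G q" "hd q = hd p" "last q = last p" "set q \<subseteq> set p"
      by (auto simp: walk_Cons)
    have qne: "q \<noteq> []" using q(1) by (simp add: gpath_def walk_def)
    show ?thesis
    proof (cases "x \<in> set q")
      case True
      then obtain q1 q2 where qs: "q = q1 @ x # q2" by (meson split_list)
      have "gpath G (x # q2)" using q(1) unfolding qs gpath_def by (auto dest: walk_suffix)
      moreover have "last (x # q2) = last q" using qs by auto
      ultimately show ?thesis using q False qs by (intro exI[of _ "x # q2"]) auto
    next
      case xq: False
      have "gpath G (x # q)" using q Cons.prems qne xq False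
        by (auto simp: gpath_def walk_Cons)
      then show ?thesis using q qne False by (intro exI[of _ "x # q"]) auto
    qed
  qed
qed

lemma dist_le: "walk G p \<Longrightarrow> hd p = x \<Longrightarrow> last p = y \<Longrightarrow> dist G x y \<le> enat (length p - 1)"
  unfolding dist_def by (rule Inf_lower) blast

lemma dist_attained:
  assumes "\<exists>p. walk G p \<and> hd p = x \<and> last p = y"
  shows "\<exists>p. walk G p \<and> hd p = x \<and> last p = y \<and> dist G x y = enat (length p - 1)"
proof -
  let ?A = "{enat (length p - 1) | p. walk G p \<and> hd p = x \<and> last p = y}"
  from assms obtain p where "walk G p \<and> hd p = x \<and> last p = y" by blast
  then have "enat (length p - 1) \<in> ?A" by blast
  then have "Inf ?A \<in> ?A" by (rule wellorder_InfI)
  then show ?thesis unfolding dist_def by blast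
qed

lemma dist_fin_walk: "dist G x y = enat n \<Longrightarrow> \<exists>p. walk G p \<and> hd p = x \<and> last p = y \<and> dist G x y = enat (length p - 1)"
proof -
  assume a: "dist G x y = enat n"
  have "\<exists>p. walk G p \<and> hd p = x \<and> last p = y"
  proof (rule ccontr)
    assume "\<not> ?thesis"
    then have "{enat (length p - 1) | p. walk G p \<and> hd p = x \<and> last p = y} = {}" by blast
    then show False using a unfolding dist_def by (simp add: Inf_enat_def)
  qed
  then show ?thesis by (rule dist_attained)
qed

lemma dist_trans: "dist G x z \<le> dist G x y + dist G y z"
proof (cases "dist G x y = \<infinity> \<or> dist G y z = \<infinity>")
  case True then show ?thesis by auto
next
  case False
  then obtain n m where nm: "dist G x y = enat n" "dist G y z = enat m" by auto
  obtain p where p: "walk G p" "hd p = x" "last p = y" "dist G x y = enat (length p - 1)"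
    using dist_fin_walk[OF nm(1)] by blast
  obtain q where q: "walk G q" "hd q = y" "last q = z" "dist G y z = enat (length q - 1)"
    using dist_fin_walk[OF nm(2)] by blast
  have pne: "p \<noteq> []" and qne: "q \<noteq> []" using walk_nonempty[OF p(1)] walk_nonempty[OF q(1)] by auto
  show ?thesis
  proof (cases "tl q = []")
    case True
    then have "q = [y]" "z = y" using q qne by (cases q; auto)+
    then show ?thesis using p q by simp
  next
    case False
    then obtain q' where q': "q = y # q'" "q' \<noteq> []" using q qne by (cases q) auto
    have "walk G (p @ q')" using p q q' pne by (auto simp: walk_append walk_Cons)
    moreover have "hd (p @ q') = x" "last (p @ q') = z" using p q q' pne by auto
    ultimately have "dist G x z \<le> enat (length (p @ q') - 1)" by (rule dist_le)
    also have "\<dots> = dist G x y + dist G y z" using p q q' pne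
      by (cases p) auto
    finally show ?thesis .
  qed
qed

lemma walk_rev: "wf_graph G \<Longrightarrow> walk G p \<Longrightarrow> walk G (rev p)"
proof (induction p)
  case Nil then show ?case by simp
next
  case (Cons x p)
  then show ?case
    by (cases "p = []") (auto simp: walk_Cons walk_append last_rev wf_graph_def)
qed

lemma dist_sym_le: "wf_graph G \<Longrightarrow> dist G y x \<le> dist G x y"
proof (cases "dist G x y")
  case (enat n)
  assume wf: "wf_graph G"
  obtain p where p: "walk G p" "hd p = x" "last p = y" "dist G x y = enat (length p - 1)"
    using dist_fin_walk[OF enat] by blast
  have "dist G y x \<le> enat (length (rev p) - 1)"
    using p walk_nonempty[OF p(1)] walk_rev[OF wf p(1)] by (intro dist_le) (auto simp: hd_rev last_rev)
  then show ?thesis using p by simp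
qed simp

lemma dist_sym: "wf_graph G \<Longrightarrow> dist G x y = dist G y x"
  by (simp add: antisym dist_sym_le)

lemma dist_refl: "x \<in> verts G \<Longrightarrow> dist G x x = 0"
  using dist_le[of G "[x]" x x] by (simp add: zero_enat_def[symmetric])

lemma dist_adj: "x \<in> verts G \<Longrightarrow> y \<in> verts G \<Longrightarrow> adj G x y \<Longrightarrow> dist G x y \<le> 1"
  using dist_le[of G "[x,y]" x y] by (simp add: walk_Cons2 one_enat_def)

lemma walk_prefix_dist:
  assumes "walk G p" "i < length p"
  shows "dist G (hd p) (p ! i) \<le> enat i"
proof -
  have t: "take (Suc i) p = take i p @ [p ! i]" using assms(2) by (simp add: take_Suc_conv_app_nth)
  have "walk G (take (Suc i) p)"
  proof (cases "drop (Suc i) p = []")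
    case True then show ?thesis using assms(1) by simp
  next
    case False
    have "walk G (take (Suc i) p @ drop (Suc i) p)" using assms(1) by simp
    then show ?thesis using False t by (subst (asm) walk_append) auto
  qed
  moreover have "hd (take (Suc i) p) = hd p" using assms by (simp add: hd_take)
  moreover have "last (take (Suc i) p) = p ! i" using t by simp
  ultimately have "dist G (hd p) (p ! i) \<le> enat (length (take (Suc i) p) - 1)" by (intro dist_le) auto
  then show ?thesis using assms by simp
qed

lemma walk_suffix_dist:
  assumes "walk G p" "i < length p"
  shows "dist G (p ! i) (last p) \<le> enat (length p - 1 - i)"
proof -
  have "walk G (drop i p)"
  proof (cases "i = 0")
    case True then show ?thesis using assms(1) by simp
  next
    case False
    have "walk G (take i p @ drop i p)" using assms(1) by simp
    then show ?thesis using False assms(2) by (subst (asm) walk_append) auto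
  qed
  moreover have "hd (drop i p) = p ! i" using assms by (simp add: hd_drop_conv_nth)
  moreover have "last (drop i p) = last p" using assms by (simp add: last_drop)
  ultimately have "dist G (p ! i) (last p) \<le> enat (length (drop i p) - 1)" by (intro dist_le) auto
  then show ?thesis using assms by simp
qed

lemma rtrancl_sym:
  assumes "\<And>a b. adj G a b \<Longrightarrow> adj G b a" "(a, b) \<in> (grel G X)\<^sup>*"
  shows "(b, a) \<in> (grel G X)\<^sup>*"
  using assms(2)
proof (induction rule: rtrancl_induct)
  case base then show ?case by simp
next
  case (step y z)
  then have "(z, y) \<in> grel G X" using assms(1) by (auto simp: grel_def)
  then show ?case using step.IH by (rule converse_rtrancl_into_rtrancl)
qed

lemma reach_sub: "(a, b) \<in> (grel G X)\<^sup>* \<Longrightarrow> a \<in> X \<Longrightarrow> b \<in> X"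
  by (induction rule: rtrancl_induct) (auto simp: grel_def)

lemma reach_sub_verts: "(a, b) \<in> (grel G X)\<^sup>* \<Longrightarrow> a \<in> verts G \<Longrightarrow> b \<in> verts G"
  by (induction rule: rtrancl_induct) (auto simp: grel_def)

lemma reach_restrict:
  "(a, b) \<in> (grel G X)\<^sup>* \<Longrightarrow> (a, b) \<in> (grel G {c. (a, c) \<in> (grel G X)\<^sup>*})\<^sup>*"
proof (induction rule: rtrancl_induct)
  case base then show ?case by simp
next
  case (step y z)
  then have "(y, z) \<in> grel G {c. (a, c) \<in> (grel G X)\<^sup>*}"
    by (auto simp: grel_def intro: rtrancl_into_rtrancl)
  with step.IH show ?case by (rule rtrancl_into_rtrancl)
qed

lemma grel_mono: "X \<subseteq> Y \<Longrightarrow> (a, b) \<in> (grel G X)\<^sup>* \<Longrightarrow> (a, b) \<in> (grel G Y)\<^sup>*"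
proof -
  assume "X \<subseteq> Y"
  then have "grel G X \<subseteq> grel G Y" by (auto simp: grel_def)
  then show "(a, b) \<in> (grel G X)\<^sup>* \<Longrightarrow> (a, b) \<in> (grel G Y)\<^sup>*" using rtrancl_mono by blast
qed

lemma change_point: "f 0 = a \<Longrightarrow> f n \<noteq> a \<Longrightarrow> \<exists>i<n. f i = a \<and> f (Suc i) \<noteq> a"
proof (induction n)
  case 0 then show ?case by simp
next
  case (Suc n)
  then show ?case
    by (cases "f n = a") (auto intro: less_SucI)
qed

lemma M_disjoint_mono: "M_disjoint G M X Y \<Longrightarrow> X' \<subseteq> X \<Longrightarrow> Y' \<subseteq> Y \<Longrightarrow> M_disjoint G M X' Y'"
  by (auto simp: M_disjoint_def)

locale skel =
  fixes G :: "'a sgraph" and x0 :: 'a and M :: nat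
  assumes wf: "wf_graph G" and conn: "connected_graph G" and M1: "M \<ge> 1" and x0: "x0 \<in> verts G"
begin

lemma adj_sym: "adj G a b \<Longrightarrow> adj G b a" using wf by (auto simp: wf_graph_def)
lemma adj_verts: "adj G a b \<Longrightarrow> a \<in> verts G \<and> b \<in> verts G" using wf by (auto simp: wf_graph_def)

lemma geo: "x \<in> verts G \<Longrightarrow> y \<in> verts G \<Longrightarrow>
   \<exists>p. walk G p \<and> hd p = x \<and> last p = y \<and> dist G x y = enat (length p - 1)"
  using conn unfolding connected_graph_def by (intro dist_attained) blast

definition nd :: "'a \<Rightarrow> nat" where "nd z = the_enat (dist G x0 z)"

lemma nd: "z \<in> verts G \<Longrightarrow> dist G x0 z = enat (nd z)"
  using geo[OF x0, of z] unfolding nd_def by auto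

definition Lz :: "'a \<Rightarrow> int" where "Lz z = \<lceil>real (nd z) / real M\<rceil> - 1"

lemma layer_eq: "layer G x0 (real M) N = {z \<in> verts G. Lz z = N}"
proof -
  have Mpos: "real M > 0" using M1 by simp
  have "(real_of_int N * real M < real n \<and> real n \<le> real_of_int (N + 1) * real M)
      \<longleftrightarrow> \<lceil>real n / real M\<rceil> - 1 = N" for n :: nat
  proof -
    have "\<lceil>real n / real M\<rceil> - 1 = N \<longleftrightarrow> \<lceil>real n / real M\<rceil> = N + 1" by auto
    also have "\<dots> \<longleftrightarrow> real_of_int N < real n / real M \<and> real n / real M \<le> real_of_int (N + 1)"
      by (simp add: ceiling_eq_iff)
    also have "\<dots> \<longleftrightarrow> real_of_int N * real M < real n \<and> real n \<le> real_of_int (N + 1) * real M"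
      using Mpos by (simp add: pos_less_divide_eq pos_divide_le_eq)
    finally show ?thesis by simp
  qed
  then show ?thesis unfolding layer_def Lz_def using nd by auto
qed

end

context skel begin
definition G' :: "'a sgraph" where "G' = (verts G, \<lambda>a b. dist G a b \<le> enat M)"
lemma G'_verts[simp]: "verts G' = verts G" by (simp add: G'_def verts_def)
lemma G'_adj[simp]: "adj G' a b = (dist G a b \<le> enat M)" by (simp add: G'_def adj_def)

lemma Mconn_iff: assumes C: "C \<subseteq> verts G"
  shows "M_connected G M C \<longleftrightarrow> (\<forall>x\<in>C. \<forall>y\<in>C. (x, y) \<in> (grel G' C)\<^sup>*)"
proof
  assume mc: "M_connected G M C"
  show "\<forall>x\<in>C. \<forall>y\<in>C. (x, y) \<in> (grel G' C)\<^sup>*"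
  proof (intro ballI)
    fix x y assume "x \<in> C" "y \<in> C"
    then obtain xs where xs: "xs \<noteq> []" "set xs \<subseteq> C" "hd xs = x" "last xs = y"
      "\<forall>i. Suc i < length xs \<longrightarrow> dist G (xs ! i) (xs ! Suc i) \<le> enat M"
      using mc unfolding M_connected_def by (meson \<open>x \<in> C\<close> \<open>y \<in> C\<close>)
    then have "walk G' xs" using C by (auto simp: walk_def)
    from walk_rtrancl[OF this xs(2)] show "(x, y) \<in> (grel G' C)\<^sup>*" using xs by simp
  qed
next
  assume r: "\<forall>x\<in>C. \<forall>y\<in>C. (x, y) \<in> (grel G' C)\<^sup>*"
  show "M_connected G M C" unfolding M_connected_def
  proof (intro ballI)
    fix x y assume xy: "x \<in> C" "y \<in> C"
    then obtain p where p: "walk G' p" "hd p = x" "last p = y" "set p \<subseteq> {z. (x, z) \<in> (grel G' C)\<^sup>*}"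
      using rtrancl_walk[of x y G' C] r C xy by auto
    have "set p \<subseteq> C" using p(4) reach_sub[of x _ G' C] xy by blast
    then show "\<exists>xs. xs \<noteq> [] \<and> set xs \<subseteq> C \<and> hd xs = x \<and> last xs = y \<and>
      (\<forall>i. Suc i < length xs \<longrightarrow> dist G (xs ! i) (xs ! Suc i) \<le> enat M)"
      using p \<open>set p \<subseteq> C\<close> unfolding walk_def by (intro exI[of _ p]) simp
  qed
qed

end

context skel begin
definition Lay :: "int \<Rightarrow> 'a set" where "Lay N = {z \<in> verts G. Lz z = N}"
definition blk :: "'a \<Rightarrow> 'a set" where "blk z = {y. (z, y) \<in> (grel G' (Lay (Lz z)))\<^sup>*}"

lemma G'_sym: "adj G' a b \<Longrightarrow> adj G' b a" using dist_sym[OF wf] by simp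

lemma blk_sub: "y \<in> blk z \<Longrightarrow> z \<in> verts G \<Longrightarrow> y \<in> verts G \<and> Lz y = Lz z"
  using reach_sub[of z y G' "Lay (Lz z)"] by (auto simp: blk_def Lay_def)

lemma blk_self: "z \<in> blk z" by (simp add: blk_def)

lemma blk_subV: "z \<in> verts G \<Longrightarrow> blk z \<subseteq> verts G" using blk_sub by blast

lemma blk_Mconn: "z \<in> verts G \<Longrightarrow> M_connected G M (blk z)"
proof -
  assume z: "z \<in> verts G"
  have r: "(z, y) \<in> (grel G' (blk z))\<^sup>*" if "y \<in> blk z" for y
    using reach_restrict[of z y G' "Lay (Lz z)"] that by (simp add: blk_def)
  show ?thesis
  proof (subst Mconn_iff[OF blk_subV[OF z]], intro ballI)
    fix x y assume x: "x \<in> blk z" and y: "y \<in> blk z"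
    have "(x, z) \<in> (grel G' (blk z))\<^sup>*" using rtrancl_sym[of G', OF G'_sym r[OF x]] .
    then show "(x, y) \<in> (grel G' (blk z))\<^sup>*" using r[OF y] by (rule rtrancl_trans)
  qed
qed

end

context skel begin
abbreviation isb where "isb B \<equiv> is_block G x0 (real M) M B"

lemma blk_block: "z \<in> verts G \<Longrightarrow> isb (blk z)"
proof -
  assume z: "z \<in> verts G"
  have sub: "blk z \<subseteq> layer G x0 (real M) (Lz z)" using blk_sub z by (auto simp: layer_eq)
  have max: "C = blk z" if C: "blk z \<subseteq> C" "C \<subseteq> layer G x0 (real M) (Lz z)" "M_connected G M C" for C
  proof
    have CV: "C \<subseteq> verts G" "C \<subseteq> Lay (Lz z)" using C(2) by (auto simp: layer_eq Lay_def)
    show "C \<subseteq> blk z"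
    proof
      fix c assume "c \<in> C"
      then have "(z, c) \<in> (grel G' C)\<^sup>*" using C(1) C(3) blk_self[of z] Mconn_iff[OF CV(1)] by blast
      then show "c \<in> blk z" using grel_mono[OF CV(2)] by (simp add: blk_def)
    qed
  qed (use C in auto)
  show ?thesis unfolding is_block_def
    using sub max blk_Mconn[OF z] blk_self[of z] by blast
qed

lemma isb_sub: "isb B \<Longrightarrow> B \<subseteq> verts G"
  by (auto simp: is_block_def layer_def)

end

context skel begin
lemma block_blk: "isb B \<Longrightarrow> z \<in> B \<Longrightarrow> B = blk z"
proof -
  assume B: "isb B" and z: "z \<in> B"
  then obtain N where N: "B \<subseteq> layer G x0 (real M) N" "M_connected G M B"
    "\<And>C. B \<subseteq> C \<and> C \<subseteq> layer G x0 (real M) N \<and> M_connected G M C \<Longrightarrow> C = B"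
    unfolding is_block_def by blast
  have zV: "z \<in> verts G" and NL: "N = Lz z" using N(1) z by (auto simp: layer_eq)
  have BV: "B \<subseteq> verts G" using N(1) by (auto simp: layer_eq)
  have BL: "B \<subseteq> Lay (Lz z)" using N(1) NL by (auto simp: layer_eq Lay_def)
  have "B \<subseteq> blk z"
  proof
    fix b assume "b \<in> B"
    then have "(z, b) \<in> (grel G' B)\<^sup>*" using N(2) z Mconn_iff[OF BV] by blast
    then show "b \<in> blk z" using grel_mono[OF BL] by (simp add: blk_def)
  qed
  moreover have "blk z \<subseteq> layer G x0 (real M) N" using blk_sub zV NL by (auto simp: layer_eq)
  ultimately show ?thesis using N(3) blk_Mconn[OF zV] by blast
qed

lemma blk_eq: "y \<in> verts G \<Longrightarrow> z \<in> verts G \<Longrightarrow> Lz y = Lz z \<Longrightarrow> dist G y z \<le> enat M \<Longrightarrow> blk y = blk z"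
proof -
  assume a: "y \<in> verts G" "z \<in> verts G" "Lz y = Lz z" "dist G y z \<le> enat M"
  then have "(y, z) \<in> grel G' (Lay (Lz y))" by (auto simp: grel_def Lay_def)
  then have "z \<in> blk y" by (auto simp: blk_def)
  then show ?thesis using block_blk[OF blk_block[OF a(1)]] by blast
qed

lemma blk_Lz: "y \<in> verts G \<Longrightarrow> z \<in> verts G \<Longrightarrow> blk y = blk z \<Longrightarrow> Lz y = Lz z"
  using blk_sub blk_self by metis

end

context skel begin

abbreviation K where "K \<equiv> skeleton G x0 (real M) M"
lemma K_verts: "verts K = {B. isb B}" by (simp add: skeleton_def verts_def)
lemma K_adj: "adj K B C = (isb B \<and> isb C \<and> B \<noteq> C \<and> (\<exists>x\<in>B. \<exists>y\<in>C. adj G x y))"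
  by (simp add: skeleton_def adj_def)

lemma K_adj_sym: "adj K B C \<Longrightarrow> adj K C B"
  using adj_sym by (auto simp: K_adj)

lemma nd_close:
  assumes "x \<in> verts G" "y \<in> verts G" "dist G x y \<le> enat M"
  shows "nd y \<le> nd x + M"
proof -
  have "enat (nd y) \<le> enat (nd x) + dist G x y"
    using dist_trans[of G x0 y x] nd assms(1,2) by simp
  also have "\<dots> \<le> enat (nd x) + enat M" using assms(3) by (rule add_left_mono)
  finally show ?thesis by simp
qed

lemma Lz_close:
  assumes "x \<in> verts G" "y \<in> verts G" "dist G x y \<le> enat M"
  shows "Lz y \<le> Lz x + 1"
proof -
  have "real (nd y) \<le> real (nd x) + real M" using nd_close[OF assms] by linarith
  then have "real (nd y) / real M \<le> (real (nd x) + real M) / real M"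
    using M1 by (intro divide_right_mono) auto
  also have "\<dots> = real (nd x) / real M + 1" using M1 by (simp add: add_divide_distrib)
  finally have "real (nd y) / real M \<le> real (nd x) / real M + 1" .
  then have "\<lceil>real (nd y) / real M\<rceil> \<le> \<lceil>real (nd x) / real M + 1\<rceil>" by (rule ceiling_mono)
  then show ?thesis unfolding Lz_def by simp
qed

lemma KN:
  assumes u: "u \<in> verts G" and w: "w \<in> verts G" and d: "dist G u w \<le> enat M"
  shows "blk u = blk w \<or> adj K (blk u) (blk w)"
proof (cases "Lz u = Lz w")
  case True then show ?thesis using blk_eq u w d by blast
next
  case False
  have dwu: "dist G w u \<le> enat M" using d dist_sym[OF wf] by simp
  obtain p where p: "walk G p" "hd p = u" "last p = w" "dist G u w = enat (length p - 1)"
    using geo[OF u w] by blast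
  have pne: "p \<noteq> []" using walk_nonempty[OF p(1)] .
  have lenM: "enat (length p - 1) \<le> enat M" using p(4) d by simp
  have on: "blk (p ! i) = blk u \<or> blk (p ! i) = blk w" if i: "i < length p" for i
  proof -
    let ?z = "p ! i"
    have zV: "?z \<in> verts G" using walk_verts[OF p(1)] i by auto
    have "dist G u ?z \<le> enat i" using walk_prefix_dist[OF p(1) i] p(2) by simp
    also have "\<dots> \<le> enat (length p - 1)" using i by simp
    finally have duz: "dist G u ?z \<le> enat M" using lenM by (rule order_trans)
    have "dist G ?z w \<le> enat (length p - 1 - i)" using walk_suffix_dist[OF p(1) i] p(3) by simp
    also have "\<dots> \<le> enat (length p - 1)" by simp
    finally have dzw: "dist G ?z w \<le> enat M" using lenM by (rule order_trans)
    have dzu: "dist G ?z u \<le> enat M" using duz dist_sym[OF wf] by simp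
    have dwz: "dist G w ?z \<le> enat M" using dzw dist_sym[OF wf] by simp
    have "Lz ?z = Lz u \<or> Lz ?z = Lz w"
      using Lz_close[OF u zV duz] Lz_close[OF zV u dzu] Lz_close[OF w zV dwz] Lz_close[OF zV w dzw]
        Lz_close[OF u w d] Lz_close[OF w u dwu] False by linarith
    then show ?thesis using blk_eq[OF zV u _ dzu] blk_eq[OF zV w _ dzw] by auto
  qed
  have ne: "blk w \<noteq> blk u" using blk_Lz u w False by metis
  define f where "f i = blk (p ! i)" for i
  have f0: "f 0 = blk u" using p(2) pne by (simp add: f_def hd_conv_nth)
  have fn: "f (length p - 1) \<noteq> blk u" using p(3) pne ne by (simp add: f_def last_conv_nth)
  obtain i where i: "i < length p - 1" "f i = blk u" "f (Suc i) \<noteq> blk u"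
    using change_point[of f, OF f0 fn] by blast
  have fs: "blk (p ! Suc i) = blk w" using on[of "Suc i"] i by (auto simp: f_def)
  have a: "adj G (p ! i) (p ! Suc i)" using p(1) i by (auto simp: walk_def)
  have "p ! i \<in> blk u" using i(2) blk_self[of "p ! i"] by (simp add: f_def)
  moreover have "p ! Suc i \<in> blk w" using fs blk_self[of "p ! Suc i"] by simp
  ultimately have "adj K (blk u) (blk w)"
    using a ne blk_block[OF u] blk_block[OF w] by (auto simp: K_adj)
  then show ?thesis by simp
qed

end

context skel begin
definition Reg :: "'a set set \<Rightarrow> 'a set" where
  "Reg S = {z \<in> verts G. \<exists>b\<in>S. blk z = b \<or> adj K b (blk z)}"
definition Img :: "'a set set \<Rightarrow> 'a set" where
  "Img S = {z. \<exists>a\<in>verts G. blk a \<in> S \<and> (a, z) \<in> (grel G (Reg S))\<^sup>*}"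

lemma WB:
  assumes b: "b \<in> S" "isb b" and a: "a \<in> b" and a': "a' \<in> b"
  shows "(a, a') \<in> (grel G (Reg S))\<^sup>*"
proof -
  have bb: "b = blk a" using block_blk[OF b(2) a] .
  have aV: "a \<in> verts G" using isb_sub[OF b(2)] a by blast
  have "(a, a') \<in> (grel G' (Lay (Lz a)))\<^sup>*" using a' bb by (simp add: blk_def)
  then show ?thesis
  proof (induction rule: rtrancl_induct)
    case base then show ?case by simp
  next
    case (step y y')
    have yb: "y \<in> blk a" using step.hyps(1) by (simp add: blk_def)
    have yV: "y \<in> verts G" "y' \<in> verts G" and dy: "dist G y y' \<le> enat M"
      using step.hyps(2) by (auto simp: grel_def)
    have by': "blk y = b" using block_blk[OF blk_block[OF aV] yb] bb by simp
    obtain p where p: "walk G p" "hd p = y" "last p = y'" "dist G y y' = enat (length p - 1)"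
      using geo[OF yV] by blast
    have "set p \<subseteq> Reg S"
    proof
      fix z assume "z \<in> set p"
      then obtain i where i: "i < length p" "z = p ! i" by (auto simp: in_set_conv_nth)
      have zV: "z \<in> verts G" using walk_verts[OF p(1)] i by auto
      have "dist G y z \<le> enat i" using walk_prefix_dist[OF p(1) i(1)] p(2) i(2) by simp
      also have "\<dots> \<le> enat (length p - 1)" using i by simp
      also have "\<dots> \<le> enat M" using p(4) dy by simp
      finally have "dist G y z \<le> enat M" .
      then have "blk y = blk z \<or> adj K (blk y) (blk z)" using KN yV(1) zV by blast
      then show "z \<in> Reg S" using zV by' b(1) unfolding Reg_def by auto
    qed
    then have "(y, y') \<in> (grel G (Reg S))\<^sup>*" using walk_rtrancl[OF p(1)] p by simp
    then show ?case using step.IH by (rule rtrancl_trans[rotated])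
  qed
qed

lemma KL:
  assumes "(b0, c) \<in> (grel K S)\<^sup>*" "b0 \<in> S" "isb b0"
  shows "\<forall>a\<in>b0. \<forall>a'\<in>c. (a, a') \<in> (grel G (Reg S))\<^sup>*"
  using assms(1)
proof (induction rule: rtrancl_induct)
  case base then show ?case using WB assms by blast
next
  case (step c c')
  have c: "c \<in> S" "isb c" "c' \<in> S" "isb c'" "adj K c c'" using step.hyps(2)
    by (auto simp: grel_def K_verts)
  then obtain x y where xy: "x \<in> c" "y \<in> c'" "adj G x y" by (auto simp: K_adj)
  have xV: "x \<in> verts G" "y \<in> verts G" using xy c isb_sub by blast+
  have "x \<in> Reg S" using xV block_blk[OF c(2) xy(1)] c(1) by (auto simp: Reg_def)
  moreover have "y \<in> Reg S" using xV block_blk[OF c(4) xy(2)] c(3) by (auto simp: Reg_def)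
  ultimately have xy': "(x, y) \<in> grel G (Reg S)" using xV xy by (auto simp: grel_def)
  show ?case
  proof (intro ballI)
    fix a a' assume a: "a \<in> b0" and a': "a' \<in> c'"
    have "(a, x) \<in> (grel G (Reg S))\<^sup>*" using step.IH a xy(1) by blast
    then have "(a, y) \<in> (grel G (Reg S))\<^sup>*" using xy' by (rule rtrancl_into_rtrancl)
    then show "(a, a') \<in> (grel G (Reg S))\<^sup>*" using WB[OF c(3,4) xy(2) a'] by (rule rtrancl_trans)
  qed
qed

end

context skel begin
lemma Reg_V: "Reg S \<subseteq> verts G" by (auto simp: Reg_def)

lemma Img_Reg: "Img S \<subseteq> Reg S"
proof
  fix z assume "z \<in> Img S"
  then obtain a where a: "a \<in> verts G" "blk a \<in> S" "(a, z) \<in> (grel G (Reg S))\<^sup>*" by (auto simp: Img_def)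
  have "a \<in> Reg S" using a by (auto simp: Reg_def)
  then show "z \<in> Reg S" using reach_sub[OF a(3)] by blast
qed

lemma base_Img: "isb b \<Longrightarrow> b \<in> S \<Longrightarrow> a \<in> b \<Longrightarrow> a \<in> Img S"
  using block_blk[of b a] isb_sub[of b] by (auto simp: Img_def)

end

context skel begin
lemma isb_ne: "isb B \<Longrightarrow> B \<noteq> {}" by (simp add: is_block_def)

lemma Img_conn: assumes "conn_sub K S" shows "conn_sub G (Img S)"
proof -
  from assms have S: "S \<noteq> {}" "S \<subseteq> {B. isb B}"
    "\<forall>x\<in>S. \<forall>y\<in>S. \<exists>p. walk K p \<and> set p \<subseteq> S \<and> hd p = x \<and> last p = y"
    unfolding conn_sub_def K_verts by blast+
  obtain b where b: "b \<in> S" using S(1) by blast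
  then have "b \<noteq> {}" using S(2) isb_ne[of b] by blast
  then obtain a where "a \<in> b" by blast
  then have ne: "Img S \<noteq> {}" using base_Img[of b S a] b S(2) by blast
  have V: "Img S \<subseteq> verts G" using Img_Reg[of S] Reg_V[of S] by blast
  have "\<exists>p. walk G p \<and> set p \<subseteq> Img S \<and> hd p = z \<and> last p = z'" if z: "z \<in> Img S" "z' \<in> Img S" for z z'
  proof -
    obtain a where a: "a \<in> verts G" "blk a \<in> S" "(a, z) \<in> (grel G (Reg S))\<^sup>*" using z(1) unfolding Img_def by blast
    obtain a' where a': "a' \<in> verts G" "blk a' \<in> S" "(a', z') \<in> (grel G (Reg S))\<^sup>*" using z(2) unfolding Img_def by blast
    obtain q where q: "walk K q" "set q \<subseteq> S" "hd q = blk a" "last q = blk a'" using S(3) a(2) a'(2) by meson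
    have "(blk a, blk a') \<in> (grel K S)\<^sup>*" using walk_rtrancl[OF q(1,2)] q by simp
    then have aa: "(a, a') \<in> (grel G (Reg S))\<^sup>*" using KL[of "blk a" "blk a'" S] a(1,2) a'(1,2) blk_block[OF a(1)] blk_self[of a] blk_self[of a'] by blast
    have za: "(z, a) \<in> (grel G (Reg S))\<^sup>*" using rtrancl_sym[of G, OF adj_sym a(3)] .
    have zz: "(z, z') \<in> (grel G (Reg S))\<^sup>*" using rtrancl_trans[OF rtrancl_trans[OF za aa] a'(3)] .
    obtain p where p: "walk G p" "hd p = z" "last p = z'" "set p \<subseteq> {y. (z, y) \<in> (grel G (Reg S))\<^sup>*}"
      using rtrancl_walk[OF zz] z(1) V by (meson subsetD)
    have "set p \<subseteq> Img S"
    proof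
      fix y assume "y \<in> set p"
      then have "(z, y) \<in> (grel G (Reg S))\<^sup>*" using p(4) by blast
      then have "(a, y) \<in> (grel G (Reg S))\<^sup>*" using a(3) by (rule rtrancl_trans[rotated])
      then show "y \<in> Img S" using a(1,2) unfolding Img_def by blast
    qed
    then show ?thesis using p by (intro exI[of _ p]) simp
  qed
  then show ?thesis using ne V unfolding conn_sub_def by blast
qed

end

context skel begin
lemma Img_path:
  assumes "gpath K q"
  shows "\<exists>p. gpath G p \<and> hd p \<in> hd q \<and> last p \<in> last q \<and> set p \<subseteq> Img (set q)"
proof -
  have q: "walk K q" "q \<noteq> []" "set q \<subseteq> {B. isb B}" using assms
    by (auto simp: gpath_def walk_def K_verts)
  have hq: "hd q \<in> set q" "last q \<in> set q" using q(2) by simp_all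
  have hb: "isb (hd q)" "isb (last q)" using q(3) hq by blast+
  obtain a where a: "a \<in> hd q" using isb_ne[OF hb(1)] by blast
  obtain a' where a': "a' \<in> last q" using isb_ne[OF hb(2)] by blast
  have "(hd q, last q) \<in> (grel K (set q))\<^sup>*" using walk_rtrancl[OF q(1)] by simp
  then have aa: "(a, a') \<in> (grel G (Reg (set q)))\<^sup>*" using KL[of "hd q" "last q" "set q", OF _ hq(1) hb(1)] a a' by blast
  have aV: "a \<in> verts G" using a isb_sub[OF hb(1)] by blast
  obtain p where p: "walk G p" "hd p = a" "last p = a'" "set p \<subseteq> {y. (a, y) \<in> (grel G (Reg (set q)))\<^sup>*}"
    using rtrancl_walk[OF aa aV] by blast
  have ab: "blk a = hd q" using block_blk[OF hb(1) a] by simp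
  have "set p \<subseteq> Img (set q)"
  proof
    fix y assume "y \<in> set p"
    then have "(a, y) \<in> (grel G (Reg (set q)))\<^sup>*" using p(4) by blast
    then show "y \<in> Img (set q)" using aV ab hq(1) unfolding Img_def by (intro CollectI bexI[of _ a] conjI) simp_all
  qed
  then obtain p' where "gpath G p'" "hd p' = a" "last p' = a'" "set p' \<subseteq> Img (set q)"
    using walk_gpath[OF p(1)] p(2,3) by (metis order_trans)
  then show ?thesis using a a' by blast
qed

end

context skel begin
lemma Reg_near: "z \<in> Reg S \<Longrightarrow> \<exists>b\<in>S. dist K b (blk z) \<le> 1 \<and> dist K (blk z) b \<le> 1"
proof -
  assume "z \<in> Reg S"
  then obtain b where b: "b \<in> S" "blk z = b \<or> adj K b (blk z)" and zV: "z \<in> verts G" by (auto simp: Reg_def)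
  have bz: "blk z \<in> verts K" using blk_block[OF zV] by (simp add: K_verts)
  show ?thesis
  proof (cases "blk z = b")
    case True then show ?thesis using b(1) dist_refl[OF bz] by (intro bexI[of _ b]) auto
  next
    case False
    then have ab: "adj K b (blk z)" using b by simp
    then have "b \<in> verts K" by (auto simp: K_adj K_verts)
    then show ?thesis using b(1) dist_adj[OF _ bz ab] dist_adj[OF bz _ K_adj_sym[OF ab]] by auto
  qed
qed

lemma Img_disj: assumes "M_disjoint K 3 S T" shows "M_disjoint G M (Img S) (Img T)"
  unfolding M_disjoint_def
proof (intro ballI)
  fix z z' assume z: "z \<in> Img S" "z' \<in> Img T"
  show "enat M < dist G z z'"
  proof (rule ccontr)
    assume "\<not> ?thesis"
    then have d: "dist G z z' \<le> enat M" by simp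
    have zR: "z \<in> Reg S" "z' \<in> Reg T" using z Img_Reg[of S] Img_Reg[of T] by blast+
    have zV: "z \<in> verts G" "z' \<in> verts G" using zR Reg_V[of S] Reg_V[of T] by blast+
    obtain b where b: "b \<in> S" "dist K b (blk z) \<le> 1" using Reg_near[OF zR(1)] by blast
    obtain b' where b': "b' \<in> T" "dist K (blk z') b' \<le> 1" using Reg_near[OF zR(2)] by blast
    have bz: "blk z \<in> verts K" using blk_block[OF zV(1)] by (simp add: K_verts)
    have bz': "blk z' \<in> verts K" using blk_block[OF zV(2)] by (simp add: K_verts)
    have m: "dist K (blk z) (blk z') \<le> 1"
    proof (cases "blk z = blk z'")
      case True then show ?thesis using dist_refl[OF bz] by simp
    next
      case False
      then have "adj K (blk z) (blk z')" using KN[OF zV d] by simp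
      then show ?thesis using dist_adj[OF bz bz'] by simp
    qed
    have "dist K (blk z) b' \<le> dist K (blk z) (blk z') + dist K (blk z') b'" by (rule dist_trans)
    also have "\<dots> \<le> 1 + 1" using m b'(2) by (rule add_mono)
    finally have t1: "dist K (blk z) b' \<le> 1 + 1" .
    have "dist K b b' \<le> dist K b (blk z) + dist K (blk z) b'" by (rule dist_trans)
    also have "\<dots> \<le> 1 + (1 + 1)" using b(2) t1 by (rule add_mono)
    also have "(1 + (1 + 1) :: enat) = 3" by simp
    finally have le3: "dist K b b' \<le> 3" .
    have "enat 3 < dist K b b'" using assms b(1) b'(1) unfolding M_disjoint_def by simp
    then show False using le3 by (simp add: numeral_eq_enat)
  qed
qed

end

theorem theorem4:
  fixes G :: "'a sgraph" and H :: "('v,'e) mgraph" and M :: nat and x0 :: 'a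
  assumes "wf_graph G" and "connected_graph G" and "unbounded_graph G"
    and "coarsely_bottlenecked G"
    and "wf_mgraph H"
    and "\<not> asymptotic_minor H G"
    and "M \<ge> 1"
    and "\<not> fat_minor M H G"
    and "x0 \<in> verts G"
  shows "\<not> fat_minor 3 H (skeleton G x0 (real M) M)"
proof
  assume fm: "fat_minor 3 H (skeleton G x0 (real M) M)"
  interpret skel G x0 M using assms(1,2,7,9) by unfold_locales
  obtain VH EH ends where H: "H = (VH, EH, ends)" by (cases H) blast
  from fm obtain B P where
    B: "\<forall>v\<in>VH. conn_sub K (B v)" and
    P: "\<forall>e\<in>EH. gpath K (P e) \<and> hd (P e) \<in> B (fst (ends e)) \<and> last (P e) \<in> B (snd (ends e))" and
    d1: "\<forall>u\<in>VH. \<forall>v\<in>VH. u \<noteq> v \<longrightarrow> M_disjoint K 3 (B u) (B v)" and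
    d2: "\<forall>e\<in>EH. \<forall>f\<in>EH. e \<noteq> f \<longrightarrow> M_disjoint K 3 (set (P e)) (set (P f))" and
    d3: "\<forall>v\<in>VH. \<forall>e\<in>EH. v \<noteq> fst (ends e) \<and> v \<noteq> snd (ends e) \<longrightarrow>
            M_disjoint K 3 (B v) (set (P e))"
    unfolding fat_minor_def H prod.case by blast
  define Q where "Q e p \<longleftrightarrow> gpath G p \<and> hd p \<in> Img (B (fst (ends e))) \<and> last p \<in> Img (B (snd (ends e)))
          \<and> set p \<subseteq> Img (set (P e))" for e p
  have ex: "\<forall>e\<in>EH. \<exists>p. gpath G p \<and> hd p \<in> Img (B (fst (ends e))) \<and> last p \<in> Img (B (snd (ends e)))
          \<and> set p \<subseteq> Img (set (P e))"
  proof
    fix e assume e: "e \<in> EH"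
    then have g: "gpath K (P e)" and h: "hd (P e) \<in> B (fst (ends e))" "last (P e) \<in> B (snd (ends e))"
      using P[rule_format, OF e] by blast+
    obtain p where p: "gpath G p" "hd p \<in> hd (P e)" "last p \<in> last (P e)" "set p \<subseteq> Img (set (P e))"
      using Img_path[OF g] by blast
    have ne: "P e \<noteq> []" and sv: "set (P e) \<subseteq> verts K" using g by (auto simp: gpath_def walk_def)
    have "hd (P e) \<in> set (P e)" "last (P e) \<in> set (P e)" using ne by simp_all
    then have ib: "isb (hd (P e))" "isb (last (P e))" using sv by (auto simp: K_verts)
    have "hd p \<in> Img (B (fst (ends e)))" using base_Img[OF ib(1) h(1) p(2)] .
    moreover have "last p \<in> Img (B (snd (ends e)))" using base_Img[OF ib(2) h(2) p(3)] .
    ultimately show "\<exists>p. gpath G p \<and> hd p \<in> Img (B (fst (ends e))) \<and> last p \<in> Img (B (snd (ends e)))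
          \<and> set p \<subseteq> Img (set (P e))" using p by blast
  qed
  define P' where "P' e = (SOME p. Q e p)" for e
  have P': "\<forall>e\<in>EH. gpath G (P' e) \<and> hd (P' e) \<in> Img (B (fst (ends e))) \<and>
      last (P' e) \<in> Img (B (snd (ends e))) \<and> set (P' e) \<subseteq> Img (set (P e))"
  proof
    fix e assume e: "e \<in> EH"
    have "\<exists>p. Q e p" using ex[rule_format, OF e] unfolding Q_def .
    then have "Q e (P' e)" unfolding P'_def by (rule someI_ex)
    then show "gpath G (P' e) \<and> hd (P' e) \<in> Img (B (fst (ends e))) \<and>
      last (P' e) \<in> Img (B (snd (ends e))) \<and> set (P' e) \<subseteq> Img (set (P e))" unfolding Q_def .
  qed
  have "fat_minor M H G" unfolding fat_minor_def H prod.case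
  proof (intro exI[of _ "\<lambda>v. Img (B v)"] exI[of _ P'] conjI ballI impI)
    fix v assume "v \<in> VH" then show "conn_sub G (Img (B v))" using Img_conn B by simp
  next
    fix e assume "e \<in> EH" then show "gpath G (P' e)" using P' by simp
  next
    fix e assume "e \<in> EH" then show "hd (P' e) \<in> Img (B (fst (ends e)))" using P' by simp
  next
    fix e assume "e \<in> EH" then show "last (P' e) \<in> Img (B (snd (ends e)))" using P' by simp
  next
    fix u v assume "u \<in> VH" "v \<in> VH" "u \<noteq> v"
    then show "M_disjoint G M (Img (B u)) (Img (B v))" using d1 Img_disj by simp
  next
    fix e f assume ef: "e \<in> EH" "f \<in> EH" "e \<noteq> f"
    then have "M_disjoint G M (Img (set (P e))) (Img (set (P f)))" using d2 Img_disj by simp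
    moreover have "set (P' e) \<subseteq> Img (set (P e))" "set (P' f) \<subseteq> Img (set (P f))" using P' ef by simp_all
    ultimately show "M_disjoint G M (set (P' e)) (set (P' f))" by (rule M_disjoint_mono)
  next
    fix v e assume ve: "v \<in> VH" "e \<in> EH" "v \<noteq> fst (ends e) \<and> v \<noteq> snd (ends e)"
    then have "M_disjoint G M (Img (B v)) (Img (set (P e)))" using d3 Img_disj by simp
    moreover have "set (P' e) \<subseteq> Img (set (P e))" using P' ve by simp
    ultimately show "M_disjoint G M (Img (B v)) (set (P' e))" using M_disjoint_mono by (metis order_refl)
  qed
  with assms(8) show False by blast
qed

end
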